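(* Let $\ell\ge1$ and consider the saturation model with $s=\ell$, i.e. thresholds $\underline{\eta}=(1,2,\dots,\ell)$, so the outcome of $y$ is $\min(y,\ell)$. For $j\ge1$ let $c_j=\frac{(\ell+1)^j-1}{\ell}$ (an integer), and let $p(c)$ be the word defined (for these thresholds) by $$p(c)=o(0)^{c}\,0\,o(1)^{c}\,0\,o(2)^{c}\cdots0\,o(\ell)^{c}\;1\,u(\ell)^{c}\;1\,u(\ell-1)^{c}\;1\,u(\ell-2)^{c}\cdots1\,u(0)^{c}\;0,$$ where $o(x)=0^{\ell-x}1^x$, $u(x)=1^x0^{\ell-x}$ and $w^c$ is the concatenation of $c$ copies of $w$. Define matrices recursively by $R_1=p(c_1)$ (a single row of length $2(\ell+1)^2$) and, for $i\ge2$, $R_i=\begin{bmatrix}p(c_i)\\ R_{i-1}R_{i-1}\cdots R_{i-1}\end{bmatrix}$, where the bottom block is the horizontal concatenation of $\ell+1$ copies of $R_{i-1}$ (so $R_i$ has $i$ rows and $2(\ell+1)^{i+1}$ columns). Let $R_i^{\infty}$ be the infinite horizontal periodic repetition of $R_i$, with columns indexed by $t\ge0$. Then for every $i\ge1$, every row index $r\in\{1,\dots,i\}$ (counted from the top) and every $t\ge0$, $$\min\Big(\sum_{u=t}^{t+\ell-1}R_i^{\infty}(r,u),\;\ell\Big)=g\Big(\big\lfloor t/(\ell+1)^{\,i+1-r}\big\rfloor \bmod 2(\ell+1)\Big),$$ where $g:\{0,\dots,2\ell+1\}\to\{0,\dots,\ell\}$ is given by $g(k)=k$ for $k\le\ell$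 and $g(k)=2\ell+1-k$ for $k\ge\ell+1$. Equivalently, the outcome matrix of $R_i^\infty$ over all length-$\ell$ bursts is the periodic repetition of $P_i\otimes\mathbf{1}^{\ell+1}$, where $P_1=(g(0),\dots,g(2\ell+1))$ and $P_i=\begin{bmatrix}(g(0),\dots,g(2\ell+1))\otimes\mathbf{1}^{(\ell+1)^{i-1}}\\ P_{i-1}\cdots P_{i-1}\end{bmatrix}$ ($\ell+1$ copies of $P_{i-1}$).
   Context: The sum $\sum_{u=t}^{t+\ell-1}R_i^\infty(r,u)$ is the number of ones the $r$-th test row has in common with the length-$\ell$ burst whose ones occupy positions $t,\dots,t+\ell-1$. $\mathbf{1}^m$ denotes the all-ones row of length $m$ and $\otimes$ the Kronecker product. *)

theory Defs
  imports Main
begin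

definition ow :: "nat \<Rightarrow> nat \<Rightarrow> nat list" where
  "ow l x = replicate (l - x) 0 @ replicate x 1"

definition uw :: "nat \<Rightarrow> nat \<Rightarrow> nat list" where
  "uw l x = replicate x 1 @ replicate (l - x) 0"

definition wpow :: "nat list \<Rightarrow> nat \<Rightarrow> nat list" where
  "wpow w c = concat (replicate c w)"

(* p(c) = o(0)^c 0 o(1)^c 0 ... 0 o(l)^c 1 u(l)^c 1 u(l-1)^c ... 1 u(0)^c 0 *)
definition pword :: "nat \<Rightarrow> nat \<Rightarrow> nat list" where
  "pword l c =
     concat (map (\<lambda>x. (if x = 0 then [] else [0]) @ wpow (ow l x) c) [0..<l+1])
     @ concat (map (\<lambda>x. [1] @ wpow (uw l (l - x)) c) [0..<l+1])
     @ [0]"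

definition cnum :: "nat \<Rightarrow> nat \<Rightarrow> nat" where
  "cnum l j = ((l + 1) ^ j - 1) div l"

(* R_i as a list of rows (top row first); R_0 = [] so that R_1 = [p(c_1)] *)
fun Rmat :: "nat \<Rightarrow> nat \<Rightarrow> nat list list" where
  "Rmat l 0 = []"
| "Rmat l (Suc i) = pword l (cnum l (Suc i)) # map (\<lambda>row. concat (replicate (l + 1) row)) (Rmat l i)"

(* R_i^infinity (r, u), rows r counted from 1 at the top, columns u from 0 *)
definition Rinf :: "nat \<Rightarrow> nat \<Rightarrow> nat \<Rightarrow> nat \<Rightarrow> nat" where
  "Rinf l i r u = (let row = Rmat l i ! (r - 1) in row ! (u mod length row))"

definition gfun :: "nat \<Rightarrow> nat \<Rightarrow> nat" where
  "gfun l k = (if k \<le> l then k else 2 * l + 1 - k)"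

end

theory Submission
  imports Defs
begin

lemma nth_concat_uniform:
  "\<forall>x\<in>set xs. length x = N \<Longrightarrow> n < N * length xs \<Longrightarrow> concat xs ! n = xs ! (n div N) ! (n mod N)"
proof (induction xs arbitrary: n)
  case Nil then show ?case by simp
next
  case (Cons x xs)
  have lx: "length x = N" using Cons.prems by simp
  show ?case
  proof (cases "n < N")
    case True
    then show ?thesis using lx by (simp add: nth_append)
  next
    case False
    then have "n - N < N * length xs" using Cons.prems by auto
    then have IH: "concat xs ! (n - N) = xs ! ((n-N) div N) ! ((n-N) mod N)" using Cons by simp
    have N0: "N > 0" using Cons.prems by (cases N) auto
    moreover have "(n - N) div N = n div N - 1" "(n-N) mod N = n mod N" using False N0
      by (simp_all add: le_div_geq le_mod_geq)
    moreover have "n div N \<ge> 1" using False N0 by (simp add: le_div_geq)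
    ultimately show ?thesis using lx False IH
      by (simp add: nth_append nth_Cons')
  qed
qed

lemma wpow_nth: "length w = l \<Longrightarrow> i < c * l \<Longrightarrow> wpow w c ! i = w ! (i mod l)"
  unfolding wpow_def
  apply (subst nth_concat_uniform[where N=l])
    apply (auto simp: mult.commute)
  by (metis less_mult_imp_div_less mult.commute nth_replicate)

lemma length_wpow[simp]: "length (wpow w c) = c * length w"
  unfolding wpow_def by (simp add: length_concat sum_list_replicate)

lemma concat_rep_nth: "length w = P \<Longrightarrow> P > 0 \<Longrightarrow> k \<ge> 1 \<Longrightarrow>
   (let row = concat (replicate k w) in row ! (u mod length row)) = w ! (u mod P)"
  apply (simp add: length_concat sum_list_replicate Let_def)
  apply (subst nth_concat_uniform[where N=P])
    apply auto
  apply (simp add: mult.commute)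
  apply (subst nth_replicate)
   apply (simp add: less_mult_imp_div_less mult.commute)
  by (metis mod_mod_cancel dvd_triv_right mult.commute)

definition Bk :: "nat \<Rightarrow> nat \<Rightarrow> nat \<Rightarrow> nat list" where
  "Bk l c k = (if k \<le> l then [0] @ wpow (ow l k) c else [1] @ wpow (uw l (2*l+1-k)) c)"

definition vw :: "nat \<Rightarrow> nat \<Rightarrow> nat list" where
  "vw l c = concat (map (Bk l c) [0..<2*(l+1)])"

lemma pword_vw: "0 # pword l c = vw l c @ [0]"
proof -
  have s1: "[0..<2*(l+1)] = [0..<l+1] @ map (\<lambda>x. x + (l+1)) [0..<l+1]"
  proof -
    have "[0..<(l+1)+(l+1)] = [0..<l+1] @ [l+1..<(l+1)+(l+1)]" by (rule upt_add_eq_append) simp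
    then show ?thesis by (simp only: map_add_upt mult_2)
  qed
  have a: "0 # concat (map (\<lambda>x. (if x = 0 then [] else [0]) @ wpow (ow l x) c) [0..<l+1])
      = concat (map (Bk l c) [0..<l+1])"
  proof -
    have e: "[0..<l+1] = 0 # [1..<l+1]" by (simp add: upt_rec)
    have H: "map (\<lambda>x. (if x = 0 then [] else [0]) @ wpow (ow l x) c) [1..<l+1] = map (Bk l c) [1..<l+1]"
      by (rule map_cong) (auto simp: Bk_def)
    show ?thesis unfolding e list.map concat.simps H by (simp add: Bk_def)
  qed
  have b: "map (\<lambda>x. [1] @ wpow (uw l (l - x)) c) [0..<l+1] = map (Bk l c) (map (\<lambda>x. x + (l+1)) [0..<l+1])"
    by (auto simp: Bk_def)
  show ?thesis unfolding vw_def pword_def s1 map_append concat_append b[symmetric] a[symmetric]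
    by simp
qed

lemma length_Bk: "length (Bk l c k) = c * l + 1"
  by (simp add: Bk_def ow_def uw_def)

lemma length_vw: "length (vw l c) = 2*(l+1)*(c*l+1)"
  by (simp add: vw_def length_concat length_Bk o_def sum_list_triv)

definition Vkq :: "nat \<Rightarrow> nat \<Rightarrow> nat \<Rightarrow> nat" where
  "Vkq l K q = (if q = 0 then (if l < K then 1 else 0)
     else if K \<le> l then (if l - K \<le> (q-1) mod l then 1 else 0)
     else (if (q-1) mod l < 2*l+1-K then 1 else 0))"

lemma ow_nth: "\<rho> < l \<Longrightarrow> ow l k ! \<rho> = (if \<rho> < l - k then 0 else 1)"
  by (simp add: ow_def nth_append)

lemma uw_nth: "\<rho> < l \<Longrightarrow> x \<le> l \<Longrightarrow> uw l x ! \<rho> = (if \<rho> < x then 1 else 0)"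
  by (simp add: uw_def nth_append)

lemma Bk_nth: assumes "l \<ge> 1" "k < 2*(l+1)" "q < c*l+1"
  shows "Bk l c k ! q = Vkq l k q"
proof (cases q)
  case 0 then show ?thesis by (simp add: Bk_def Vkq_def)
next
  case (Suc p)
  then have p: "p < c * l" using assms by simp
  have lp: "p mod l < l" using assms by simp
  show ?thesis
  proof (cases "k \<le> l")
    case True
    have "wpow (ow l k) c ! p = ow l k ! (p mod l)" by (rule wpow_nth) (use True p in \<open>simp_all add: ow_def\<close>)
    then show ?thesis using Suc p lp True
      by (simp add: Bk_def Vkq_def ow_nth)
  next
    case False
    have "wpow (uw l (2*l+1-k)) c ! p = uw l (2*l+1-k) ! (p mod l)" by (rule wpow_nth) (use False p in \<open>simp_all add: uw_def\<close>)
    then show ?thesis using Suc p lp False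
      by (simp add: Bk_def Vkq_def uw_nth)
  qed
qed

lemma vw_nth: assumes "l \<ge> 1" "m < 2*(l+1)*(c*l+1)"
  shows "vw l c ! m = Vkq l (m div (c*l+1)) (m mod (c*l+1))"
proof -
  have "vw l c ! m = map (Bk l c) [0..<2*(l+1)] ! (m div (c*l+1)) ! (m mod (c*l+1))"
    unfolding vw_def using assms
    by (intro nth_concat_uniform) (auto simp: length_Bk mult.commute)
  moreover have "m div (c*l+1) < 2*(l+1)" using assms
    by (simp add: less_mult_imp_div_less)
  ultimately show ?thesis using assms by (simp add: Bk_nth nth_map_upt del: upt_Suc)
qed

lemma step_q0:
  assumes l: "l \<ge> 1" and K: "K = (if Suc K' = 2*(l+1) then 0 else Suc K')" and K': "K' < 2*(l+1)"
  shows "gfun l K + Vkq l K 0 = gfun l K' + Vkq l K l"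
proof -
  have m: "(l - 1) mod l = l - 1" using l by simp
  consider "K' < l" | "K' = l" | "l < K' \<and> K' < 2*l+1" | "K' = 2*l+1" using K' by atomize_elim arith
  then show ?thesis
  proof cases
    case 1 then have "K = Suc K'" using K by simp
    then show ?thesis using 1 m l by (simp add: gfun_def Vkq_def) arith?
  next
    case 2 then have "K = Suc K'" using K by simp
    then show ?thesis using 2 m l by (simp add: gfun_def Vkq_def) arith?
  next
    case 3 then have "K = Suc K'" using K by simp
    then show ?thesis using 3 m l by (simp add: gfun_def Vkq_def) arith?
  next
    case 4 then have "K = 0" using K by simp
    then show ?thesis using 4 m l by (simp add: gfun_def Vkq_def) arith?
  qed
qed

lemma step_same:
  assumes "q \<ge> 1" "l \<ge> 1" shows "Vkq l K q = Vkq l K (q + l)"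
proof -
  have "(q + l - 1) mod l = (q - 1) mod l" using assms
    by (metis Nat.add_diff_assoc2 mod_add_self2)
  then show ?thesis using assms unfolding Vkq_def by simp
qed

lemma step_cross:
  assumes l: "l \<ge> 1" and K: "K' = (if Suc K = 2*(l+1) then 0 else Suc K)" and KK: "K < 2*(l+1)"
    and e: "e < l" and r: "(q - 1) mod l = e" and q: "q \<ge> 1"
  shows "Vkq l K q = Vkq l K' e"
proof -
  have m: "e \<noteq> 0 \<Longrightarrow> (e - 1) mod l = e - 1" using e by simp
  consider "K < l" | "K = l" | "l < K \<and> K < 2*l+1" | "K = 2*l+1" using KK by atomize_elim arith
  then show ?thesis
  proof cases
    case 1 then have "K' = Suc K" using K by simp
    then show ?thesis using 1 m l r q e by (cases "e = 0") (simp_all add: Vkq_def, arith?)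
  next
    case 2 then have "K' = Suc K" using K by simp
    then show ?thesis using 2 m l r q e by (cases "e = 0") (simp_all add: Vkq_def, arith?)
  next
    case 3 then have "K' = Suc K" using K by simp
    then show ?thesis using 3 m l r q e by (cases "e = 0") (simp_all add: Vkq_def, arith?)
  next
    case 4 then have "K' = 0" using K by simp
    then show ?thesis using 4 m l r q e by (cases "e = 0") (simp_all add: Vkq_def, arith?)
  qed
qed

lemma dm: "q < (N::nat) \<Longrightarrow> (a*N+q) div N = a \<and> (a*N+q) mod N = q"
  by simp

lemma step_main:
  assumes l: "l \<ge> 1" and c: "c \<ge> 1" and N: "N = c*l+1" and m: "m \<ge> 1"
  shows "gfun l (m div N mod (2*(l+1))) + Vkq l (m div N mod (2*(l+1))) (m mod N)
       = gfun l ((m-1) div N mod (2*(l+1))) + Vkq l ((m+l) div N mod (2*(l+1))) ((m+l) mod N)"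
proof -
  define a where "a = m div N"
  define q where "q = m mod N"
  have cl: "l \<le> c*l" using c by simp
  have N0: "N > l" using N cl by linarith
  have mq: "m = a*N + q" unfolding a_def q_def by simp
  have qN: "q < N" unfolding q_def using N0 by simp
  show ?thesis
  proof (cases "q = 0")
    case True
    then have "a \<ge> 1" using m mq by (cases a) auto
    then obtain b where b: "a = Suc b" by (cases a) auto
    have "m - 1 = b*N + (N-1)" using mq True b N0 by simp
    then have d1: "(m-1) div N = b" using N0 dm[of "N-1" N b] by simp
    have "m + l = a*N + l" using mq True by simp
    then have d2: "(m+l) div N = a" "(m+l) mod N = l" using N0 dm[of l N a] by simp_all
    have "gfun l (a mod (2*(l+1))) + Vkq l (a mod (2*(l+1))) 0 = gfun l (b mod (2*(l+1))) + Vkq l (a mod (2*(l+1))) l"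
      using l by (rule step_q0) (simp_all only: b mod_Suc, simp)
    then show ?thesis using d1 d2 True unfolding a_def q_def by simp
  next
    case False
    show ?thesis
    proof (cases "q + l < N")
      case True
      have "m - 1 = a*N + (q-1)" using mq False by simp
      then have d1: "(m-1) div N = a" using qN dm[of "q-1" N a] by simp
      have e2: "m + l = a*N + (q+l)" using mq by simp
      have d2: "(m+l) div N = a" "(m+l) mod N = q + l" using dm[OF True, of a] by (simp_all only: e2)
      show ?thesis using d1 d2 step_same[of q l "a mod (2*(l+1))"] False l unfolding a_def q_def by simp
    next
      case True2: False
      define e where "e = q + l - N"
      have el: "e < l" using qN l unfolding e_def by simp
      have "m - 1 = a*N + (q-1)" using mq False by simp
      then have d1: "(m-1) div N = a" using qN dm[of "q-1" N a] by simp
      have "m + l = Suc a*N + e" using mq True2 unfolding e_def by simp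
      then have d2: "(m+l) div N = Suc a" "(m+l) mod N = e" using el N0 dm[of e N "Suc a"] by simp_all
      have "q - 1 = e + (c-1)*l" using True2 N c unfolding e_def by (simp add: diff_mult_distrib)
      then have r: "(q - 1) mod l = e" using el by simp
      have "Vkq l (a mod (2*(l+1))) q = Vkq l (Suc a mod (2*(l+1))) e"
        using l by (rule step_cross) (simp_all only: mod_Suc el r, use False in simp_all)
      then show ?thesis using d1 d2 unfolding a_def q_def by simp
    qed
  qed
qed

lemma mod_mult_parts:
  assumes "(N::nat) > 0"
  shows "(x mod (M*N)) div N = x div N mod M" "(x mod (M*N)) mod N = x mod N"
proof -
  have e: "x mod (N*M) = N*(x div N mod M) + x mod N" by (rule mod_mult2_eq)
  have "x mod N < N" using assms by simp
  then show "(x mod (M*N)) div N = x div N mod M" "(x mod (M*N)) mod N = x mod N"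
    using dm[of "x mod N" N "x div N mod M"] e by (simp_all add: mult.commute)
qed

lemma vw_nth_mod: assumes l: "l \<ge> 1"
  shows "vw l c ! (m mod (2*(l+1)*(c*l+1))) = Vkq l (m div (c*l+1) mod (2*(l+1))) (m mod (c*l+1))"
proof -
  have "m mod (2*(l+1)*(c*l+1)) < 2*(l+1)*(c*l+1)" by simp
  then show ?thesis using vw_nth[OF l] mod_mult_parts[of "c*l+1" m "2*(l+1)"] by simp
qed

lemma length_pword: "length (pword l c) = 2*(l+1)*(c*l+1)"
proof -
  have "length (0 # pword l c) = length (vw l c @ [0])" by (simp only: pword_vw)
  then show ?thesis by (simp add: length_vw)
qed

lemma pword_nth_mod: assumes l: "l \<ge> 1"
  shows "pword l c ! (u mod (2*(l+1)*(c*l+1))) = Vkq l (Suc u div (c*l+1) mod (2*(l+1))) (Suc u mod (c*l+1))"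
proof -
  define L where "L = 2*(l+1)*(c*l+1)"
  have L0: "L > 0" unfolding L_def by simp
  have "pword l c ! (u mod L) = (0 # pword l c) ! Suc (u mod L)" by simp
  also have "\<dots> = (vw l c @ [0]) ! Suc (u mod L)" by (simp only: pword_vw)
  also have "\<dots> = vw l c ! (Suc u mod L)"
  proof (cases "Suc (u mod L) < L")
    case True
    then have "Suc u mod L = Suc (u mod L)" by (simp add: mod_Suc)
    then show ?thesis using True by (simp add: nth_append length_vw L_def)
  next
    case False
    have "u mod L < L" using L0 by simp
    then have s: "Suc (u mod L) = L" using False by linarith
    then have "Suc u mod L = 0" by (simp add: mod_Suc)
    moreover have "vw l c ! 0 = 0" using vw_nth[OF l, of 0 c] by (simp add: Vkq_def)
    ultimately show ?thesis using s by (simp add: nth_append length_vw L_def)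
  qed
  also have "\<dots> = Vkq l (Suc u div (c*l+1) mod (2*(l+1))) (Suc u mod (c*l+1))"
    unfolding L_def by (rule vw_nth_mod[OF l])
  finally show ?thesis unfolding L_def .
qed

lemma window:
  assumes l: "l \<ge> 1" and c: "c \<ge> 1"
  shows "(\<Sum>u = t..<t + l. pword l c ! (u mod (2*(l+1)*(c*l+1)))) = gfun l (t div (c*l+1) mod (2*(l+1)))"
proof (induction t)
  case 0
  have "\<And>u. u < l \<Longrightarrow> pword l c ! (u mod (2*(l+1)*(c*l+1))) = 0"
  proof -
    fix u assume u: "u < l"
    have cl: "l \<le> c*l" using c by simp
    then have "Suc u < c*l+1" using u by linarith
    then have "Suc u div (c*l+1) = 0" "Suc u mod (c*l+1) = Suc u" by simp_all
    then show "pword l c ! (u mod (2*(l+1)*(c*l+1))) = 0" using pword_nth_mod[OF l, of c u] u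
      by (simp add: Vkq_def)
  qed
  then show ?case by (simp add: gfun_def)
next
  case (Suc t)
  define V where "V m = Vkq l (m div (c*l+1) mod (2*(l+1))) (m mod (c*l+1))" for m
  define f where "f u = pword l c ! (u mod (2*(l+1)*(c*l+1)))" for u
  have fV: "f u = V (Suc u)" for u unfolding f_def V_def by (rule pword_nth_mod[OF l])
  have s1: "sum f {t..<t+l} = f t + sum f {Suc t..<t+l}" using l by (simp add: sum.atLeast_Suc_lessThan)
  have s2: "sum f {Suc t..<Suc t + l} = sum f {Suc t..<t+l} + f (t+l)" using l by simp
  have st: "gfun l (Suc t div (c*l+1) mod (2*(l+1))) + V (Suc t)
       = gfun l ((Suc t - 1) div (c*l+1) mod (2*(l+1))) + V (Suc t + l)"
    unfolding V_def by (rule step_main[OF l c refl]) simp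
  have "sum f {Suc t..<Suc t + l} + V (Suc t) = gfun l (t div (c*l+1) mod (2*(l+1))) + V (Suc t + l)"
    using Suc.IH s1 s2 fV unfolding f_def[symmetric] by simp
  then show ?case using st unfolding f_def[symmetric] by simp
qed

lemma concat_rep_rep: "concat (replicate n (concat (replicate k w))) = concat (replicate (n*k) w)"
  by (induction n) (simp_all add: replicate_add)

lemma Rmat_len: "length (Rmat l i) = i"
  by (induction i) simp_all

lemma Rmat_row: "1 \<le> r \<Longrightarrow> r \<le> i \<Longrightarrow>
   \<exists>k\<ge>1. Rmat l i ! (r-1) = concat (replicate k (pword l (cnum l (i+1-r))))"
proof (induction i arbitrary: r)
  case 0 then show ?case by simp
next
  case (Suc i)
  show ?case
  proof (cases "r = 1")
    case True
    then show ?thesis by (intro exI[of _ 1]) simp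
  next
    case False
    then have r: "2 \<le> r" "r - 1 \<le> i" "1 \<le> r - 1" using Suc.prems by auto
    obtain k where k: "k \<ge> 1" "Rmat l i ! (r-1-1) = concat (replicate k (pword l (cnum l (i+1-(r-1)))))"
      using Suc.IH[OF r(3) r(2)] by blast
    have e: "r - 1 = Suc (r - 1 - 1)" using r by simp
    have "Rmat l (Suc i) ! (r-1) = concat (replicate (l+1) (Rmat l i ! (r-1-1)))"
      using r Rmat_len[of l i] by (subst e) simp
    also have "\<dots> = concat (replicate ((l+1)*k) (pword l (cnum l (Suc i+1-r))))"
    proof -
      have "i+1-(r-1) = Suc i + 1 - r" using r by simp
      then show ?thesis unfolding k(2) by (simp only: concat_rep_rep)
    qed
    finally show ?thesis using k by (intro exI[of _ "(l+1)*k"]) simp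
  qed
qed

lemma pow_form: "(l::nat) \<ge> 1 \<Longrightarrow> j \<ge> 1 \<Longrightarrow> \<exists>c\<ge>1. (l+1)^j = c*l+1"
proof (induction j)
  case 0 then show ?case by simp
next
  case (Suc j)
  show ?case
  proof (cases "j = 0")
    case True then show ?thesis by (intro exI[of _ 1]) auto
  next
    case False
    then obtain c where c: "c \<ge> 1" "(l+1)^j = c*l+1" using Suc by auto
    have "(l+1)^Suc j = (c*l + c + 1)*l + 1" using c by (simp add: algebra_simps)
    then show ?thesis by (intro exI[of _ "c*l+c+1"]) simp
  qed
qed

theorem mainTheorem3:
  fixes l i r t :: nat
  assumes "l \<ge> 1" and "i \<ge> 1" and "1 \<le> r" and "r \<le> i"
  shows "min (\<Sum>u = t..<t + l. Rinf l i r u) l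
           = gfun l ((t div (l + 1) ^ (i + 1 - r)) mod (2 * (l + 1)))"
proof -
  have j: "i+1-r \<ge> 1" using assms by simp
  obtain c where c: "c \<ge> 1" "(l+1)^(i+1-r) = c*l+1"
    using pow_form[OF assms(1) j] by blast
  have cn: "cnum l (i+1-r) = c" unfolding cnum_def c(2) using assms(1) by simp
  obtain k where k: "k \<ge> 1" "Rmat l i ! (r-1) = concat (replicate k (pword l c))"
    using Rmat_row[OF assms(3,4), of l] cn by auto
  have R: "Rinf l i r u = pword l c ! (u mod (2*(l+1)*(c*l+1)))" for u
    unfolding Rinf_def k(2) by (rule concat_rep_nth[OF length_pword _ k(1)]) simp
  have W: "(\<Sum>u = t..<t + l. Rinf l i r u) = gfun l (t div (c*l+1) mod (2*(l+1)))"
    unfolding R by (rule window[OF assms(1) c(1)])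
  have "gfun l x \<le> l" for x unfolding gfun_def by (cases "x \<le> l") auto
  then show ?thesis unfolding W c(2) by (simp add: min_def)
qed

end
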